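(* Let $n\in\mathbb{N}$, $r\in\mathbb{N}_0$, let $u(x,t_r)$ be smooth on $\mathbb{R}^2$, and let polynomials (in $z$, coefficients smooth in $(x,t_r)$) $F_n,H_n$ (degree $n$, leading coefficient $1$), $G_{n-1}$, $\tilde F_r,\tilde H_r$ (degree $r$), $\tilde G_{r-1}$ ($\tilde G_{-1}=0$) satisfy for all $z$: $F_{n,x}=-iu_xF_n-2izG_{n-1}$, $H_{n,x}=iu_xH_n+2izG_{n-1}$, $G_{n-1,x}=i(H_n-F_n)$, $u_{xt_r}=-2i\tilde G_{r-1,x}-2(\tilde H_r-\tilde F_r)$, $\tilde F_{r,x}=-iu_x\tilde F_r-2iz\tilde G_{r-1}$, $\tilde H_{r,x}=iu_x\tilde H_r+2iz\tilde G_{r-1}$, and $z^2G_{n-1}^2+zF_nH_n=R_{2n+1}(z)=\prod_{m=0}^{2n}(z-E_m)$ independent of $(x,t_r)$, where $E_0=0$ and $E_m\neq0$ for $m\ge1$. Then $$F_{n,t_r}=2(G_{n-1}\tilde F_r-\tilde G_{r-1}F_n),\qquad zG_{n-1,t_r}=F_n\tilde H_r-\tilde F_rH_n,\qquad H_{n,t_r}=2(\tilde G_{r-1}H_n-G_{n-1}\tilde H_r),$$ and these three equations are equivalent to $V_{n,t_r}=[\tilde V_r,V_n]$.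
   Context: $V_n(z,x,t_r)=\begin{pmatrix}-G_{n-1}&\frac1zF_n\\ H_n&G_{n-1}\end{pmatrix}$ and $\tilde V_r(z,x,t_r)=\begin{pmatrix}-\tilde G_{r-1}&\frac1z\tilde F_r\\ \tilde H_r&\tilde G_{r-1}\end{pmatrix}$; $[A,B]=AB-BA$. *)

theory Defs
  imports "HOL-Analysis.Analysis"
begin

definition px :: "(real \<Rightarrow> real \<Rightarrow> complex) \<Rightarrow> real \<Rightarrow> real \<Rightarrow> complex" where
  "px f x t = vector_derivative (\<lambda>s. f s t) (at x)"

definition pt :: "(real \<Rightarrow> real \<Rightarrow> complex) \<Rightarrow> real \<Rightarrow> real \<Rightarrow> complex" where
  "pt f x t = vector_derivative (\<lambda>s. f x s) (at t)"

fun pd :: "bool list \<Rightarrow> (real \<Rightarrow> real \<Rightarrow> complex) \<Rightarrow> real \<Rightarrow> real \<Rightarrow> complex" where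
  "pd [] f = f"
| "pd (b # w) f = (if b then px (pd w f) else pt (pd w f))"

definition smooth2 :: "(real \<Rightarrow> real \<Rightarrow> complex) \<Rightarrow> bool" where
  "smooth2 f \<longleftrightarrow>
     (\<forall>w. (\<forall>x t. (\<lambda>s. pd w f s t) differentiable (at x)
                 \<and> (\<lambda>s. pd w f x s) differentiable (at t))
        \<and> continuous_on UNIV (\<lambda>p. pd w f (fst p) (snd p)))"

definition polyz :: "(nat \<Rightarrow> real \<Rightarrow> real \<Rightarrow> complex) \<Rightarrow> nat \<Rightarrow> complex \<Rightarrow> real \<Rightarrow> real \<Rightarrow> complex" where
  "polyz c d z x t = (\<Sum>k<d. c k x t * z ^ k)"

definition mat2 :: "complex \<Rightarrow> complex \<Rightarrow> complex \<Rightarrow> complex \<Rightarrow> complex^2^2" where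
  "mat2 a b c d = (\<chi> i j. if i = 1 then (if j = 1 then a else b) else (if j = 1 then c else d))"

definition mat_pt :: "(real \<Rightarrow> real \<Rightarrow> complex^2^2) \<Rightarrow> real \<Rightarrow> real \<Rightarrow> complex^2^2" where
  "mat_pt M x t = (\<chi> i j. pt (\<lambda>x' t'. M x' t' $ i $ j) x t)"

definition commut :: "complex^2^2 \<Rightarrow> complex^2^2 \<Rightarrow> complex^2^2" where
  "commut A B = A ** B - B ** A"

end

theory Submission imports Defs "HOL-Computational_Algebra.Polynomial" begin

lemma clairaut:
  fixes f :: "real \<Rightarrow> real \<Rightarrow> complex"
  assumes dx: "\<And>x t. (\<lambda>s. f s t) differentiable (at x)"
    and dt: "\<And>x t. (\<lambda>s. f x s) differentiable (at t)"
    and dxt: "\<And>x t. (\<lambda>s. px f x s) differentiable (at t)"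
    and dtx: "\<And>x t. (\<lambda>s. pt f s t) differentiable (at x)"
    and cx: "continuous_on UNIV (\<lambda>p. px f (fst p) (snd p))"
    and cxt: "continuous_on UNIV (\<lambda>p. pt (px f) (fst p) (snd p))"
  shows "px (pt f) x t = pt (px f) x t"
proof -
  define a where "a = x - 1"
  define b where "b = x + 1"
  have cxs: "continuous_on S (\<lambda>s. px f s \<tau>)" for S \<tau>
  proof -
    have "continuous_on UNIV (\<lambda>s. px f s \<tau>)"
      using continuous_on_compose2[OF cx, of UNIV "\<lambda>s. (s, \<tau>)"] by (simp add: continuous_on_Pair)
    then show ?thesis by (rule continuous_on_subset) auto
  qed
  have cxts: "continuous_on S (\<lambda>s. pt (px f) s \<tau>)" for S \<tau>
  proof -
    have "continuous_on UNIV (\<lambda>s. pt (px f) s \<tau>)"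
      using continuous_on_compose2[OF cxt, of UNIV "\<lambda>s. (s, \<tau>)"] by (simp add: continuous_on_Pair)
    then show ?thesis by (rule continuous_on_subset) auto
  qed
  have ftc: "f s \<tau> = f a \<tau> + integral {a..s} (\<lambda>\<sigma>. px f \<sigma> \<tau>)" if "a \<le> s" for s \<tau>
  proof -
    have "((\<lambda>\<sigma>. px f \<sigma> \<tau>) has_integral (f s \<tau> - f a \<tau>)) {a..s}"
      apply (rule fundamental_theorem_of_calculus[OF that])
      unfolding px_def
      by (rule has_vector_derivative_at_within) (use dx vector_derivative_works in blast)
    then show ?thesis by (simp add: integral_unique)
  qed
  have leib: "((\<lambda>\<tau>. integral (cbox a s) (\<lambda>\<sigma>. px f \<sigma> \<tau>)) has_vector_derivative
      integral (cbox a s) (\<lambda>\<sigma>. pt (px f) \<sigma> t)) (at t within UNIV)" for s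
  proof (rule leibniz_rule_vector_derivative[where f="\<lambda>\<tau> \<sigma>. px f \<sigma> \<tau>" and fx="\<lambda>\<tau> \<sigma>. pt (px f) \<sigma> \<tau>"])
    show "((\<lambda>\<tau>. px f \<sigma> \<tau>) has_vector_derivative pt (px f) \<sigma> \<tau>) (at \<tau> within UNIV)" for \<tau> \<sigma>
      unfolding pt_def using dxt vector_derivative_works by blast
    show "(\<lambda>\<sigma>. px f \<sigma> \<tau>) integrable_on cbox a s" for \<tau>
      by (rule integrable_continuous) (rule cxs)
    show "continuous_on (UNIV \<times> cbox a s) (\<lambda>(\<tau>, \<sigma>). pt (px f) \<sigma> \<tau>)"
    proof -
      have "continuous_on UNIV (\<lambda>p. pt (px f) (snd p) (fst p))"
        using continuous_on_compose2[OF cxt, of UNIV "\<lambda>p. (snd p, fst p)"]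
        by (simp add: continuous_on_Pair continuous_on_snd continuous_on_fst continuous_on_id)
      then have "continuous_on UNIV (\<lambda>(\<tau>, \<sigma>). pt (px f) \<sigma> \<tau>)"
        by (simp add: case_prod_beta')
      then show ?thesis by (rule continuous_on_subset) auto
    qed
  qed auto
  have ptf: "pt f s t = pt f a t + integral {a..s} (\<lambda>\<sigma>. pt (px f) \<sigma> t)" if "a \<le> s" for s
  proof -
    have e: "(\<lambda>\<tau>. f s \<tau>) = (\<lambda>\<tau>. f a \<tau> + integral {a..s} (\<lambda>\<sigma>. px f \<sigma> \<tau>))"
      using ftc[OF that] by auto
    have "((\<lambda>\<tau>. f a \<tau> + integral {a..s} (\<lambda>\<sigma>. px f \<sigma> \<tau>)) has_vector_derivative
        pt f a t + integral {a..s} (\<lambda>\<sigma>. pt (px f) \<sigma> t)) (at t)"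
      apply (rule has_vector_derivative_add)
      subgoal unfolding pt_def using dt vector_derivative_works by blast
      subgoal using leib[of s] by simp
      done
    then show ?thesis unfolding pt_def[of f s t] e by (rule vector_derivative_at)
  qed
  have "((\<lambda>s. pt f a t + integral {a..s} (\<lambda>\<sigma>. pt (px f) \<sigma> t)) has_vector_derivative
      pt (px f) x t) (at x)"
  proof -
    have "((\<lambda>s. integral {a..s} (\<lambda>\<sigma>. pt (px f) \<sigma> t)) has_vector_derivative
      pt (px f) x t) (at x within {a..b})"
      by (rule integral_has_vector_derivative[OF cxts]) (simp add: a_def b_def)
    then have "((\<lambda>s. integral {a..s} (\<lambda>\<sigma>. pt (px f) \<sigma> t)) has_vector_derivative
      pt (px f) x t) (at x)"
      using at_within_interior[of x "{a..b}"] by (simp add: a_def b_def)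
    then show ?thesis by (intro derivative_eq_intros) auto
  qed
  then have "((\<lambda>s. pt f s t) has_vector_derivative pt (px f) x t) (at x)"
  proof (rule has_vector_derivative_transform_within_open[where S="{a<..}"])
    show "(\<lambda>s. pt f a t + integral {a..s} (\<lambda>\<sigma>. pt (px f) \<sigma> t)) y = pt f y t"
      if "y \<in> {a<..}" for y using ptf[of y] that by auto
  qed (auto simp: a_def)
  then show ?thesis unfolding px_def[of "pt f"] by (rule vector_derivative_at)
qed

definition DX :: "(real \<Rightarrow> real \<Rightarrow> complex) \<Rightarrow> bool" where
  "DX f \<longleftrightarrow> (\<forall>x t. (\<lambda>s. f s t) differentiable (at x))"
definition DT :: "(real \<Rightarrow> real \<Rightarrow> complex) \<Rightarrow> bool" where
  "DT f \<longleftrightarrow> (\<forall>x t. (\<lambda>s. f x s) differentiable (at t))"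

lemma DX_const[simp]: "DX (\<lambda>x t. c)" by (simp add: DX_def)
lemma DX_add[simp]: "DX f \<Longrightarrow> DX g \<Longrightarrow> DX (\<lambda>x t. f x t + g x t)" by (simp add: DX_def)
lemma DX_diff[simp]: "DX f \<Longrightarrow> DX g \<Longrightarrow> DX (\<lambda>x t. f x t - g x t)" by (simp add: DX_def)
lemma DX_mult[simp]: "DX f \<Longrightarrow> DX g \<Longrightarrow> DX (\<lambda>x t. f x t * g x t)" by (simp add: DX_def)
lemma DX_minus[simp]: "DX f \<Longrightarrow> DX (\<lambda>x t. - f x t)" by (simp add: DX_def)
lemma DX_sum[simp]: "(\<And>k. DX (f k)) \<Longrightarrow> DX (\<lambda>x t. \<Sum>k\<in>A. f k x t)"
  unfolding DX_def by (cases "finite A") (auto intro!: differentiable_sum)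
lemma DT_const[simp]: "DT (\<lambda>x t. c)" by (simp add: DT_def)
lemma DT_add[simp]: "DT f \<Longrightarrow> DT g \<Longrightarrow> DT (\<lambda>x t. f x t + g x t)" by (simp add: DT_def)
lemma DT_diff[simp]: "DT f \<Longrightarrow> DT g \<Longrightarrow> DT (\<lambda>x t. f x t - g x t)" by (simp add: DT_def)
lemma DT_mult[simp]: "DT f \<Longrightarrow> DT g \<Longrightarrow> DT (\<lambda>x t. f x t * g x t)" by (simp add: DT_def)
lemma DT_minus[simp]: "DT f \<Longrightarrow> DT (\<lambda>x t. - f x t)" by (simp add: DT_def)
lemma DT_sum[simp]: "(\<And>k. DT (f k)) \<Longrightarrow> DT (\<lambda>x t. \<Sum>k\<in>A. f k x t)"
  unfolding DT_def by (cases "finite A") (auto intro!: differentiable_sum)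

lemma px_const[simp]: "px (\<lambda>x t. c) x t = 0" by (simp add: px_def)
lemma px_add[simp]: "DX f \<Longrightarrow> DX g \<Longrightarrow> px (\<lambda>x t. f x t + g x t) x t = px f x t + px g x t"
  by (simp add: DX_def px_def)
lemma px_diff[simp]: "DX f \<Longrightarrow> DX g \<Longrightarrow> px (\<lambda>x t. f x t - g x t) x t = px f x t - px g x t"
  by (simp add: DX_def px_def)
lemma px_mult[simp]: "DX f \<Longrightarrow> DX g \<Longrightarrow> px (\<lambda>x t. f x t * g x t) x t = f x t * px g x t + px f x t * g x t"
  by (simp add: DX_def px_def)
lemma px_minus[simp]: "DX f \<Longrightarrow> px (\<lambda>x t. - f x t) x t = - px f x t"
  by (simp add: DX_def px_def)
lemma px_sum[simp]: "(\<And>k. DX (f k)) \<Longrightarrow> px (\<lambda>x t. \<Sum>k\<in>A. f k x t) x t = (\<Sum>k\<in>A. px (f k) x t)"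
  unfolding DX_def px_def
  by (cases "finite A") (auto intro!: vector_derivative_at has_vector_derivative_sum vector_derivative_works[THEN iffD1])

lemma pt_const[simp]: "pt (\<lambda>x t. c) x t = 0" by (simp add: pt_def)
lemma pt_add[simp]: "DT f \<Longrightarrow> DT g \<Longrightarrow> pt (\<lambda>x t. f x t + g x t) x t = pt f x t + pt g x t"
  by (simp add: DT_def pt_def)
lemma pt_diff[simp]: "DT f \<Longrightarrow> DT g \<Longrightarrow> pt (\<lambda>x t. f x t - g x t) x t = pt f x t - pt g x t"
  by (simp add: DT_def pt_def)
lemma pt_mult[simp]: "DT f \<Longrightarrow> DT g \<Longrightarrow> pt (\<lambda>x t. f x t * g x t) x t = f x t * pt g x t + pt f x t * g x t"
  by (simp add: DT_def pt_def)
lemma pt_minus[simp]: "DT f \<Longrightarrow> pt (\<lambda>x t. - f x t) x t = - pt f x t"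
  by (simp add: DT_def pt_def)
lemma pt_sum[simp]: "(\<And>k. DT (f k)) \<Longrightarrow> pt (\<lambda>x t. \<Sum>k\<in>A. f k x t) x t = (\<Sum>k\<in>A. pt (f k) x t)"
  unfolding DT_def pt_def
  by (cases "finite A") (auto intro!: vector_derivative_at has_vector_derivative_sum vector_derivative_works[THEN iffD1])

lemma DX_polyz[simp]: "(\<And>k. DX (c k)) \<Longrightarrow> DX (polyz c N z)"
  unfolding polyz_def by simp
lemma DT_polyz[simp]: "(\<And>k. DT (c k)) \<Longrightarrow> DT (polyz c N z)"
  unfolding polyz_def by simp
lemma px_polyz: "(\<And>k. DX (c k)) \<Longrightarrow> px (polyz c N z) x t = polyz (\<lambda>k. px (c k)) N z x t"
  unfolding polyz_def by simp
lemma pt_polyz: "(\<And>k. DT (c k)) \<Longrightarrow> pt (polyz c N z) x t = polyz (\<lambda>k. pt (c k)) N z x t"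
  unfolding polyz_def by simp

lemma smooth_facts:
  assumes "smooth2 f"
  shows "DX f" "DT f" "DX (px f)" "DT (px f)" "DX (pt f)" "DT (pt f)"
    "px (pt f) x t = pt (px f) x t"
proof -
  have w: "\<And>x t. (\<lambda>s. pd w f s t) differentiable (at x)"
     "\<And>x t. (\<lambda>s. pd w f x s) differentiable (at t)"
     "continuous_on UNIV (\<lambda>p. pd w f (fst p) (snd p))" for w
    using assms unfolding smooth2_def by blast+
  note w0 = w[of "[]", simplified] and w1 = w[of "[True]", simplified]
    and w2 = w[of "[False]", simplified] and w3 = w[of "[False,True]", simplified]
  show "DX f" "DT f" "DX (px f)" "DT (px f)" "DX (pt f)" "DT (pt f)"
    unfolding DX_def DT_def using w0 w1 w2 by auto
  show "px (pt f) x t = pt (px f) x t"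
    by (rule clairaut) (use w0 w1 w2 w3 in auto)
qed

definition Pz :: "(nat \<Rightarrow> real \<Rightarrow> real \<Rightarrow> complex) \<Rightarrow> nat \<Rightarrow> real \<Rightarrow> real \<Rightarrow> complex poly" where
  "Pz c N x t = (\<Sum>k<N. monom (c k x t) k)"

lemma poly_Pz[simp]: "poly (Pz c N x t) z = polyz c N z x t"
  by (simp add: Pz_def polyz_def poly_sum poly_monom)

lemma coeff_Pz[simp]: "coeff (Pz c N x t) k = (if k < N then c k x t else 0)"
  by (simp add: Pz_def coeff_sum)

lemma degree_Pz: "degree (Pz c N x t) \<le> N - 1"
  by (rule degree_le) auto

definition CX :: "(real \<Rightarrow> real \<Rightarrow> complex poly) \<Rightarrow> bool" where
  "CX P \<longleftrightarrow> (\<forall>k. DX (\<lambda>x t. coeff (P x t) k))"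

lemma CX_Pz[simp]: "(\<And>k. DX (c k)) \<Longrightarrow> CX (Pz c N)"
  unfolding CX_def
proof
  fix k assume "\<And>k. DX (c k)"
  then show "DX (\<lambda>x t. coeff (Pz c N x t) k)"
    by (cases "k < N") simp_all
qed

lemma CX_const[simp]: "CX (\<lambda>x t. p)" by (simp add: CX_def)
lemma CX_add[simp]: "CX P \<Longrightarrow> CX Q \<Longrightarrow> CX (\<lambda>x t. P x t + Q x t)" by (simp add: CX_def)
lemma CX_diff[simp]: "CX P \<Longrightarrow> CX Q \<Longrightarrow> CX (\<lambda>x t. P x t - Q x t)" by (simp add: CX_def)
lemma CX_mult[simp]: "CX P \<Longrightarrow> CX Q \<Longrightarrow> CX (\<lambda>x t. P x t * Q x t)"
  by (simp add: CX_def coeff_mult)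
lemma CX_pCons0[simp]: "CX P \<Longrightarrow> CX (\<lambda>x t. pCons 0 (P x t))"
  unfolding CX_def
proof
  fix k assume "\<forall>k. DX (\<lambda>x t. coeff (P x t) k)"
  then show "DX (\<lambda>x t. coeff (pCons 0 (P x t)) k)"
    by (cases k) simp_all
qed
lemma CX_smult[simp]: "CX P \<Longrightarrow> CX (\<lambda>x t. smult c (P x t))" by (simp add: CX_def)

lemma poly_eq_sum_lt: "degree p < N \<Longrightarrow> poly p (z::complex) = (\<Sum>k<N. coeff p k * z ^ k)"
  unfolding poly_altdef
  by (rule sum.mono_neutral_left) (auto simp: coeff_eq_0)

lemma px_poly:
  assumes "CX P" "\<And>x t. degree (P x t) < N"
  shows "px (\<lambda>x t. poly (P x t) z) x t = poly (Pz (\<lambda>k. px (\<lambda>x t. coeff (P x t) k)) N x t) z"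
proof -
  have "(\<lambda>x t. poly (P x t) z) = polyz (\<lambda>k x t. coeff (P x t) k) N z"
    by (intro ext) (simp add: polyz_def poly_eq_sum_lt[OF assms(2)])
  moreover have "\<And>k. DX (\<lambda>x t. coeff (P x t) k)" using assms(1) by (simp add: CX_def)
  ultimately show ?thesis by (simp add: px_polyz)
qed

lemma coeff_mult_top:
  assumes "degree p \<le> m" "degree q \<le> k"
  shows "coeff (p * q) (m + k) = coeff p m * coeff q k"
proof -
  have "coeff (p * q) (m + k) = (\<Sum>i\<le>m+k. coeff p i * coeff q (m + k - i))"
    by (rule coeff_mult)
  also have "\<dots> = (\<Sum>i\<in>{m}. coeff p i * coeff q (m + k - i))"
  proof (rule sum.mono_neutral_right)
    show "\<forall>i\<in>{..m + k} - {m}. coeff p i * coeff q (m + k - i) = 0"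
    proof
      fix i assume "i \<in> {..m + k} - {m}"
      then have "i < m \<or> i > m" by auto
      then show "coeff p i * coeff q (m + k - i) = 0"
        using assms by (auto simp: coeff_eq_0)
    qed
  qed auto
  finally show ?thesis by simp
qed

lemma pt_divc[simp]: "DT f \<Longrightarrow> pt (\<lambda>x t. f x t / c) x t = pt f x t / c"
  unfolding DT_def pt_def
  by (intro vector_derivative_at has_vector_derivative_divide) (simp add: vector_derivative_works[symmetric])

lemma deg_mult_le': "degree p \<le> a \<Longrightarrow> degree q \<le> b \<Longrightarrow> a + b \<le> c \<Longrightarrow> degree (p * q) \<le> c"
  by (meson add_mono degree_mult_le order_trans)

lemma deg_smult_le': "degree p \<le> a \<Longrightarrow> degree (smult c p) \<le> a"
  by (meson degree_smult_le order_trans)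

lemma deg_Pz': "N - 1 \<le> a \<Longrightarrow> degree (Pz c N x t) \<le> a"
  by (meson degree_Pz order_trans)

theorem lemma4p2:
  fixes n r :: nat
    and u :: "real \<Rightarrow> real \<Rightarrow> complex"
    and f g h ft gt ht :: "nat \<Rightarrow> real \<Rightarrow> real \<Rightarrow> complex"
    and E :: "nat \<Rightarrow> complex"
  defines "F \<equiv> polyz f (Suc n)" and "G \<equiv> polyz g n" and "H \<equiv> polyz h (Suc n)"
      and "Ft \<equiv> polyz ft (Suc r)" and "Gt \<equiv> polyz gt r" and "Ht \<equiv> polyz ht (Suc r)"
  assumes n_pos: "n \<ge> 1"
    and u_smooth: "smooth2 u"
    and coeff_smooth: "\<And>k. smooth2 (f k) \<and> smooth2 (g k) \<and> smooth2 (h k)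
                             \<and> smooth2 (ft k) \<and> smooth2 (gt k) \<and> smooth2 (ht k)"
    and F_monic: "\<And>x t. f n x t = 1"
    and H_monic: "\<And>x t. h n x t = 1"
    and Ft_deg: "ft r \<noteq> (\<lambda>x t. 0)"
    and Ht_deg: "ht r \<noteq> (\<lambda>x t. 0)"
    and eqF: "\<And>z x t. px (F z) x t = - \<i> * px u x t * F z x t - 2 * \<i> * z * G z x t"
    and eqH: "\<And>z x t. px (H z) x t = \<i> * px u x t * H z x t + 2 * \<i> * z * G z x t"
    and eqG: "\<And>z x t. px (G z) x t = \<i> * (H z x t - F z x t)"
    and equ: "\<And>z x t. pt (px u) x t = - 2 * \<i> * px (Gt z) x t - 2 * (Ht z x t - Ft z x t)"
    and eqFt: "\<And>z x t. px (Ft z) x t = - \<i> * px u x t * Ft z x t - 2 * \<i> * z * Gt z x t"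
    and eqHt: "\<And>z x t. px (Ht z) x t = \<i> * px u x t * Ht z x t + 2 * \<i> * z * Gt z x t"
    and E0: "E 0 = 0"
    and Enz: "\<And>m. 1 \<le> m \<Longrightarrow> m \<le> 2 * n \<Longrightarrow> E m \<noteq> 0"
    and constraint: "\<And>z x t. z\<^sup>2 * (G z x t)\<^sup>2 + z * F z x t * H z x t
                              = (\<Prod>m\<le>2 * n. z - E m)"
  shows "(\<forall>z x t. pt (F z) x t = 2 * (G z x t * Ft z x t - Gt z x t * F z x t)
              \<and> z * pt (G z) x t = F z x t * Ht z x t - Ft z x t * H z x t
              \<and> pt (H z) x t = 2 * (Gt z x t * H z x t - G z x t * Ht z x t))
       \<and> ((\<forall>z x t. pt (F z) x t = 2 * (G z x t * Ft z x t - Gt z x t * F z x t)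
              \<and> z * pt (G z) x t = F z x t * Ht z x t - Ft z x t * H z x t
              \<and> pt (H z) x t = 2 * (Gt z x t * H z x t - G z x t * Ht z x t))
          \<longleftrightarrow>
          (\<forall>z. z \<noteq> 0 \<longrightarrow> (\<forall>x t.
              mat_pt (\<lambda>x' t'. mat2 (- G z x' t') (F z x' t' / z) (H z x' t') (G z x' t')) x t
              = commut (mat2 (- Gt z x t) (Ft z x t / z) (Ht z x t) (Gt z x t))
                       (mat2 (- G z x t) (F z x t / z) (H z x t) (G z x t)))))"
proof -
  have sf: "\<And>k. smooth2 (f k)" "\<And>k. smooth2 (g k)" "\<And>k. smooth2 (h k)"
    "\<And>k. smooth2 (ft k)" "\<And>k. smooth2 (gt k)" "\<And>k. smooth2 (ht k)"
    using coeff_smooth by auto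
  note S[simp] = smooth_facts(1-6)[OF sf(1)] smooth_facts(1-6)[OF sf(2)] smooth_facts(1-6)[OF sf(3)]
    smooth_facts(1-6)[OF sf(4)] smooth_facts(1-6)[OF sf(5)] smooth_facts(1-6)[OF sf(6)]
    smooth_facts(1-6)[OF u_smooth]
  note M = smooth_facts(7)[OF sf(1)] smooth_facts(7)[OF sf(2)] smooth_facts(7)[OF sf(3)]
  have D[simp]: "DX (F z)" "DX (G z)" "DX (H z)" "DX (Ft z)" "DX (Gt z)" "DX (Ht z)"
    "DT (F z)" "DT (G z)" "DT (H z)" "DT (Ft z)" "DT (Gt z)" "DT (Ht z)" for z
    unfolding F_def G_def H_def Ft_def Gt_def Ht_def by simp_all
  have ptF: "pt (F z) = polyz (\<lambda>k. pt (f k)) (Suc n) z" for z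
    by (intro ext) (simp add: F_def pt_polyz)
  have ptG: "pt (G z) = polyz (\<lambda>k. pt (g k)) n z" for z
    by (intro ext) (simp add: G_def pt_polyz)
  have ptH: "pt (H z) = polyz (\<lambda>k. pt (h k)) (Suc n) z" for z
    by (intro ext) (simp add: H_def pt_polyz)
  have pxF: "px (F z) = polyz (\<lambda>k. px (f k)) (Suc n) z" for z
    by (intro ext) (simp add: F_def px_polyz)
  have pxG: "px (G z) = polyz (\<lambda>k. px (g k)) n z" for z
    by (intro ext) (simp add: G_def px_polyz)
  have pxH: "px (H z) = polyz (\<lambda>k. px (h k)) (Suc n) z" for z
    by (intro ext) (simp add: H_def px_polyz)
  have Dd[simp]: "DX (pt (F z))" "DX (pt (G z))" "DX (pt (H z))" for z
    unfolding ptF ptG ptH by simp_all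
  have mixF: "px (pt (F z)) x t = pt (px (F z)) x t" for z x t
    unfolding ptF pxF by (simp add: px_polyz pt_polyz polyz_def M)
  have mixG: "px (pt (G z)) x t = pt (px (G z)) x t" for z x t
    unfolding ptG pxG by (simp add: px_polyz pt_polyz polyz_def M)
  have mixH: "px (pt (H z)) x t = pt (px (H z)) x t" for z x t
    unfolding ptH pxH by (simp add: px_polyz pt_polyz polyz_def M)
  have eqF': "px (F z) = (\<lambda>x t. - \<i> * px u x t * F z x t - 2 * \<i> * z * G z x t)" for z
    by (intro ext) (rule eqF)
  have eqH': "px (H z) = (\<lambda>x t. \<i> * px u x t * H z x t + 2 * \<i> * z * G z x t)" for z
    by (intro ext) (rule eqH)
  have eqG': "px (G z) = (\<lambda>x t. \<i> * (H z x t - F z x t))" for z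
    by (intro ext) (rule eqG)
  define A where "A z x t = z * pt (G z) x t - F z x t * Ht z x t + Ft z x t * H z x t" for z x t
  define B where "B z x t = pt (F z) x t - 2 * (G z x t * Ft z x t - Gt z x t * F z x t)" for z x t
  define C where "C z x t = pt (H z) x t - 2 * (Gt z x t * H z x t - G z x t * Ht z x t)" for z x t
  have E1: "px (B z) x t = - \<i> * px u x t * B z x t - 2 * \<i> * A z x t" for z x t
  proof -
    have "px (B z) x t = px (pt (F z)) x t - 2 * (G z x t * px (Ft z) x t + px (G z) x t * Ft z x t
       - (Gt z x t * px (F z) x t + px (Gt z) x t * F z x t))"
      unfolding B_def[abs_def] by simp
    also have "px (pt (F z)) x t = - \<i> * pt (px u) x t * F z x t - \<i> * px u x t * pt (F z) x t
       - 2 * \<i> * z * pt (G z) x t"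
      unfolding mixF eqF' by (simp add: algebra_simps)
    finally show ?thesis
      unfolding equ[where z=z] eqFt eqF eqG A_def B_def by (simp add: algebra_simps)
  qed
  have E3: "px (A z) x t = \<i> * z * (C z x t - B z x t)" for z x t
  proof -
    have "px (A z) x t = z * px (pt (G z)) x t - (F z x t * px (Ht z) x t + px (F z) x t * Ht z x t)
       + (Ft z x t * px (H z) x t + px (Ft z) x t * H z x t)"
      unfolding A_def[abs_def] by simp
    also have "px (pt (G z)) x t = \<i> * (pt (H z) x t - pt (F z) x t)"
      unfolding mixG eqG' by (simp add: algebra_simps)
    finally show ?thesis
      unfolding eqHt eqFt eqF eqH A_def B_def C_def by (simp add: algebra_simps)
  qed
  have E4: "2 * z * G z x t * A z x t + z * (F z x t * C z x t + H z x t * B z x t) = 0" for z x t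
  proof -
    have "(\<lambda>x t. z * z * (G z x t * G z x t) + z * F z x t * H z x t) = (\<lambda>x t. \<Prod>m\<le>2 * n. z - E m)"
      using constraint by (simp add: power2_eq_square)
    then have "pt (\<lambda>x t. z * z * (G z x t * G z x t) + z * F z x t * H z x t) x t = 0"
      by simp
    then show ?thesis
      unfolding A_def B_def C_def by (simp add: algebra_simps)
  qed
  define N where "N = n + r + 2"
  define PA where "PA x t = [:0,1:] * Pz (\<lambda>k. pt (g k)) n x t - Pz f (Suc n) x t * Pz ht (Suc r) x t
     + Pz ft (Suc r) x t * Pz h (Suc n) x t" for x t
  define PB where "PB x t = Pz (\<lambda>k. pt (f k)) (Suc n) x t
     - smult 2 (Pz g n x t * Pz ft (Suc r) x t - Pz gt r x t * Pz f (Suc n) x t)" for x t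
  define PC where "PC x t = Pz (\<lambda>k. pt (h k)) (Suc n) x t
     - smult 2 (Pz gt r x t * Pz h (Suc n) x t - Pz g n x t * Pz ht (Suc r) x t)" for x t
  have repA: "A z x t = poly (PA x t) z" for z x t
    unfolding A_def PA_def F_def Ht_def Ft_def H_def G_def by (simp add: pt_polyz)
  have repB: "B z x t = poly (PB x t) z" for z x t
    unfolding B_def PB_def F_def G_def Ft_def Gt_def by (simp add: pt_polyz)
  have repC: "C z x t = poly (PC x t) z" for z x t
    unfolding C_def PC_def H_def G_def Ht_def Gt_def by (simp add: pt_polyz)
  have CXA: "CX PA" unfolding PA_def[abs_def] by simp
  have CXB: "CX PB" unfolding PB_def[abs_def] by simp
  have CXC: "CX PC" unfolding PC_def[abs_def] by simp
  have degA: "degree (PA x t) < N" for x t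
  proof -
    have "degree (PA x t) \<le> n + r + 1"
      unfolding PA_def
      by (intro degree_add_le degree_diff_le deg_mult_le'[OF order_refl deg_Pz'[OF order_refl]]
            deg_mult_le'[OF deg_Pz'[OF order_refl] deg_Pz'[OF order_refl]]) auto
    then show ?thesis by (simp add: N_def)
  qed
  have degB: "degree (PB x t) < N" for x t
  proof -
    have "degree (PB x t) \<le> n + r + 1"
      unfolding PB_def
      by (intro degree_add_le degree_diff_le deg_smult_le' deg_Pz'
            deg_mult_le'[OF deg_Pz'[OF order_refl] deg_Pz'[OF order_refl]]) auto
    then show ?thesis by (simp add: N_def)
  qed
  have degC: "degree (PC x t) < N" for x t
  proof -
    have "degree (PC x t) \<le> n + r + 1"
      unfolding PC_def
      by (intro degree_add_le degree_diff_le deg_smult_le' deg_Pz'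
            deg_mult_le'[OF deg_Pz'[OF order_refl] deg_Pz'[OF order_refl]]) auto
    then show ?thesis by (simp add: N_def)
  qed
  define Dp where "Dp P k x t = px (\<lambda>x t. coeff (P x t) k) x t"
    for P :: "real \<Rightarrow> real \<Rightarrow> complex poly" and k x t
  have pxA: "px (A z) x t = poly (Pz (Dp PA) N x t) z" for z x t
  proof -
    have "A z = (\<lambda>x t. poly (PA x t) z)" by (intro ext) (rule repA)
    then show ?thesis using px_poly[OF CXA degA] by (simp add: Dp_def[abs_def])
  qed
  have pxB: "px (B z) x t = poly (Pz (Dp PB) N x t) z" for z x t
  proof -
    have "B z = (\<lambda>x t. poly (PB x t) z)" by (intro ext) (rule repB)
    then show ?thesis using px_poly[OF CXB degB] by (simp add: Dp_def[abs_def])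
  qed
  have peq1: "Pz (Dp PB) N x t = smult (- \<i> * px u x t) (PB x t) - smult (2 * \<i>) (PA x t)" for x t
  proof -
    have "poly (Pz (Dp PB) N x t) = poly (smult (- \<i> * px u x t) (PB x t) - smult (2 * \<i>) (PA x t))"
    proof
      fix z show "poly (Pz (Dp PB) N x t) z = poly (smult (- \<i> * px u x t) (PB x t) - smult (2 * \<i>) (PA x t)) z"
        using E1[of z x t] by (simp add: pxB repA repB)
    qed
    then show ?thesis by (simp add: poly_eq_poly_eq_iff)
  qed
  have peq3: "Pz (Dp PA) N x t = [:0, \<i>:] * (PC x t - PB x t)" for x t
  proof -
    have "poly (Pz (Dp PA) N x t) = poly ([:0, \<i>:] * (PC x t - PB x t))"
    proof
      fix z show "poly (Pz (Dp PA) N x t) z = poly ([:0, \<i>:] * (PC x t - PB x t)) z"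
        using E3[of z x t] by (simp add: pxA repC repB algebra_simps)
    qed
    then show ?thesis by (simp add: poly_eq_poly_eq_iff)
  qed
  have orth: "smult 2 (Pz g n x t * PA x t) + Pz f (Suc n) x t * PC x t + Pz h (Suc n) x t * PB x t = 0"
    for x t
  proof -
    let ?X = "smult 2 (Pz g n x t * PA x t) + Pz f (Suc n) x t * PC x t + Pz h (Suc n) x t * PB x t"
    have "poly ([:0,1:] * ?X) = poly 0"
    proof
      fix z show "poly ([:0,1:] * ?X) z = poly 0 z"
        using E4[of z x t] by (simp add: repA repB repC F_def G_def H_def algebra_simps)
    qed
    then have "[:0,1:] * ?X = 0" by (simp add: poly_eq_poly_eq_iff)
    then show ?thesis by simp
  qed
  define SS where "SS d \<longleftrightarrow> (\<forall>x t k. d \<le> k \<longrightarrow>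
      coeff (PA x t) k = 0 \<and> coeff (PB x t) k = 0 \<and> coeff (PC x t) k = 0)" for d
  have degPF: "degree (Pz f (Suc n) x t) \<le> n" for x t by (rule deg_Pz') simp
  have degPH: "degree (Pz h (Suc n) x t) \<le> n" for x t by (rule deg_Pz') simp
  have degPG: "degree (Pz g n x t) \<le> n - 1" for x t by (rule deg_Pz') simp
  have SN: "SS N" unfolding SS_def
  proof (intro allI impI)
    fix x t k assume "N \<le> k"
    then show "coeff (PA x t) k = 0 \<and> coeff (PB x t) k = 0 \<and> coeff (PC x t) k = 0"
      using degA[of x t] degB[of x t] degC[of x t] by (simp add: coeff_eq_0)
  qed
  have step: "SS d" if dN: "d < N" and IH: "SS (Suc d)" for d
  proof -
    have dA: "degree (PA x t) \<le> d" for x t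
      using IH unfolding SS_def by (intro degree_le) auto
    have dB: "degree (PB x t) \<le> d" for x t
      using IH unfolding SS_def by (intro degree_le) auto
    have dC: "degree (PC x t) \<le> d" for x t
      using IH unfolding SS_def by (intro degree_le) auto
    have z1: "(\<lambda>x t. coeff (PA x t) (Suc d)) = (\<lambda>x t. 0)"
      using IH unfolding SS_def by auto
    have cb: "coeff (PC x t) d = coeff (PB x t) d" for x t
    proof -
      have "coeff (Pz (Dp PA) N x t) (Suc d) = coeff ([:0, \<i>:] * (PC x t - PB x t)) (Suc d)"
        by (simp only: peq3)
      moreover have "coeff (Pz (Dp PA) N x t) (Suc d) = 0"
        by (simp add: Dp_def z1)
      ultimately show ?thesis by simp
    qed
    have bc0: "coeff (PB x t) d = 0 \<and> coeff (PC x t) d = 0" for x t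
    proof -
      have "coeff (smult 2 (Pz g n x t * PA x t) + Pz f (Suc n) x t * PC x t + Pz h (Suc n) x t * PB x t) (n + d) = 0"
        by (simp only: orth) simp
      moreover have "coeff (Pz g n x t * PA x t) (n + d) = 0"
      proof (rule coeff_eq_0)
        have "degree (Pz g n x t * PA x t) \<le> (n - 1) + d"
          by (rule deg_mult_le'[OF degPG dA]) simp
        then show "degree (Pz g n x t * PA x t) < n + d" using n_pos by simp
      qed
      moreover have "coeff (Pz f (Suc n) x t * PC x t) (n + d) = coeff (PC x t) d"
        using coeff_mult_top[OF degPF dC] F_monic by simp
      moreover have "coeff (Pz h (Suc n) x t * PB x t) (n + d) = coeff (PB x t) d"
        using coeff_mult_top[OF degPH dB] H_monic by simp
      ultimately show ?thesis using cb[of x t] by simp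
    qed
    have z2: "(\<lambda>x t. coeff (PB x t) d) = (\<lambda>x t. 0)"
      using bc0 by auto
    have a0: "coeff (PA x t) d = 0" for x t
    proof -
      have "coeff (Pz (Dp PB) N x t) d = coeff (smult (- \<i> * px u x t) (PB x t) - smult (2 * \<i>) (PA x t)) d"
        by (simp only: peq1)
      moreover have "coeff (Pz (Dp PB) N x t) d = 0"
        by (simp add: Dp_def z2)
      ultimately show ?thesis using bc0[of x t] by simp
    qed
    show ?thesis unfolding SS_def
    proof (intro allI impI)
      fix x t k assume "d \<le> k"
      then consider "k = d" | "Suc d \<le> k" by linarith
      then show "coeff (PA x t) k = 0 \<and> coeff (PB x t) k = 0 \<and> coeff (PC x t) k = 0"
      proof cases
        case 1 then show ?thesis using a0 bc0 by simp
      next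
        case 2 then show ?thesis using IH unfolding SS_def by blast
      qed
    qed
  qed
  have "j \<le> N \<longrightarrow> SS (N - j)" for j
  proof (induction j)
    case 0 then show ?case using SN by simp
  next
    case (Suc j)
    show ?case
    proof
      assume "Suc j \<le> N"
      then have "SS (N - j)" using Suc by simp
      moreover have "N - j = Suc (N - Suc j)" using \<open>Suc j \<le> N\<close> by simp
      ultimately show "SS (N - Suc j)" using step[of "N - Suc j"] \<open>Suc j \<le> N\<close> by simp
    qed
  qed
  then have S0: "SS 0" by (metis diff_self_eq_0 order_refl)
  have Z: "PA x t = 0" "PB x t = 0" "PC x t = 0" for x t
    using S0 unfolding SS_def by (auto intro: poly_eqI)
  have claims: "\<forall>z x t. pt (F z) x t = 2 * (G z x t * Ft z x t - Gt z x t * F z x t)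
              \<and> z * pt (G z) x t = F z x t * Ht z x t - Ft z x t * H z x t
              \<and> pt (H z) x t = 2 * (Gt z x t * H z x t - G z x t * Ht z x t)"
  proof (intro allI)
    fix z x t
    have "A z x t = 0" "B z x t = 0" "C z x t = 0" by (simp_all add: repA repB repC Z)
    then show "pt (F z) x t = 2 * (G z x t * Ft z x t - Gt z x t * F z x t)
              \<and> z * pt (G z) x t = F z x t * Ht z x t - Ft z x t * H z x t
              \<and> pt (H z) x t = 2 * (Gt z x t * H z x t - G z x t * Ht z x t)"
      unfolding A_def B_def C_def by (simp add: algebra_simps)
  qed
  have mat: "mat_pt (\<lambda>x' t'. mat2 (- G z x' t') (F z x' t' / z) (H z x' t') (G z x' t')) x t
              = commut (mat2 (- Gt z x t) (Ft z x t / z) (Ht z x t) (Gt z x t))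
                       (mat2 (- G z x t) (F z x t / z) (H z x t) (G z x t))"
    if z0: "z \<noteq> 0" for z x t
  proof -
    have c1: "pt (F z) x t = 2 * (G z x t * Ft z x t - Gt z x t * F z x t)"
      and c2: "z * pt (G z) x t = F z x t * Ht z x t - Ft z x t * H z x t"
      and c3: "pt (H z) x t = 2 * (Gt z x t * H z x t - G z x t * Ht z x t)"
      using claims by blast+
    have c2': "pt (G z) x t = (F z x t * Ht z x t - Ft z x t * H z x t) / z"
      using c2 z0 by (simp add: field_simps)
    show ?thesis
      unfolding mat_pt_def commut_def mat2_def
      by (simp add: vec_eq_iff forall_2 matrix_matrix_mult_def sum_2 c1 c2' c3 field_simps z0)
         (simp add: algebra_simps)?
  qed
  show ?thesis using claims mat by blast
qed

end
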